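(* Let $0<a<1$ and let $\tau_1,\tau_2:[0,a]\to[0,1]$ be continuously differentiable, strictly increasing maps with $\tau_i(0)=0$, $\tau_i(a)=1$, $\tau_1(x)\le x/a$ and $\tau_2(x)\ge x/a$, such that $\tau_{21}=\tau_2^{-1}\circ\tau_1:[0,a]\to[0,a]$ is continuously differentiable and satisfies $\tau_{21}(x)<x$ for $x\in(0,a)$. Let $0<\widehat a<a$ and $\sigma<1$ be such that $\tau_{21}'(x)\le\sigma$ for $x\in[0,\widehat a]$, and let $p$ be the unique bounded solution on $[0,\widehat a]$ of $$p(x)=p(\tau_{21}(x))\,\tau_{21}'(x)-\left[\tau_{21}'(x)-a\,\tau_1'(x)\right].\qquad(\ast)$$ Then $p$ extends uniquely to a function on $[0,a)$ satisfying $(\ast)$ for all $x\in[0,a)$, and this extension is given for every $x\in[0,a)$ by the convergent series $$p(x)=\sum_{n=0}^\infty B(\tau_{21}^n(x))\,(\tau_{21}^n)'(x),\qquad B(x)=a\,\tau_1'(x)-\tau_{21}'(x).$$ In particular, the resulting function on $[0,a)$ does not depend on the choice of $\widehat a$. *)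

theory Defs
  imports "HOL-Analysis.Analysis"
begin

end

theory Submission
  imports Defs
begin


definition Dp :: "(real \<Rightarrow> real) \<Rightarrow> (real \<Rightarrow> real) \<Rightarrow> nat \<Rightarrow> real \<Rightarrow> real" where
  "Dp T d n x = (\<Prod>j<n. d ((T^^j) x))"

lemma iter_in: "\<forall>x\<in>S. T x \<in> S \<Longrightarrow> x \<in> S \<Longrightarrow> (T^^n) x \<in> S"
  by (induction n) auto

lemma Dp_0[simp]: "Dp T d 0 x = 1" by (simp add: Dp_def)

lemma Dp_Suc: "Dp T d (Suc n) x = Dp T d n x * d ((T^^n) x)"
  by (simp add: Dp_def)

lemma Dp_add: "Dp T d (n + N) x = Dp T d N x * Dp T d n ((T^^N) x)"
  by (induction n) (simp_all add: Dp_Suc funpow_add mult.assoc)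

lemma iter_formula:
  assumes S: "\<forall>x\<in>S. T x \<in> S" and eq: "\<forall>x\<in>S. f x = f (T x) * d x - (d x - c x)" and x: "x \<in> S"
  shows "f x = (\<Sum>k<N. (c ((T^^k) x) - d ((T^^k) x)) * Dp T d k x) + f ((T^^N) x) * Dp T d N x"
proof (induction N)
  case 0 show ?case by simp
next
  case (Suc N)
  have y: "(T^^N) x \<in> S" using iter_in[OF S x] .
  have e: "f ((T^^N) x) = f ((T^^Suc N) x) * d ((T^^N) x) - (d ((T^^N) x) - c ((T^^N) x))"
    using eq y by simp
  have "f x = (\<Sum>k<N. (c ((T^^k) x) - d ((T^^k) x)) * Dp T d k x)
     + (f ((T^^Suc N) x) * d ((T^^N) x) - (d ((T^^N) x) - c ((T^^N) x))) * Dp T d N x"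
    using Suc.IH e by (simp only:)
  also have "\<dots> = (\<Sum>k<Suc N. (c ((T^^k) x) - d ((T^^k) x)) * Dp T d k x) + f ((T^^Suc N) x) * Dp T d (Suc N) x"
    unfolding Dp_Suc sum.lessThan_Suc by (simp only: algebra_simps)
  finally show ?case .
qed

lemma deriv_iter:
  assumes D: "\<forall>x\<in>{0..a}. (T has_real_derivative d x) (at x within {0..a})"
    and R: "\<forall>x\<in>{0..(a::real)}. T x \<in> {0..a}" and x: "x \<in> {0..a}"
  shows "((T^^n) has_real_derivative Dp T d n x) (at x within {0..a})"
proof (induction n)
  case 0 show ?case by (simp add: id_def)
next
  case (Suc n)
  have y: "(T^^n) x \<in> {0..a}" using iter_in[OF R x] .
  have sub: "(T^^n) ` {0..a} \<subseteq> {0..a}" using iter_in[OF R] by blast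
  have "(T has_real_derivative d ((T^^n) x)) (at ((T^^n) x) within (T^^n) ` {0..a})"
    using D y sub has_field_derivative_subset by blast
  from DERIV_image_chain[OF this Suc.IH] show ?case
    by (simp add: Dp_Suc mult.commute o_def)
qed

lemma vderiv_iter:
  assumes D: "\<forall>x\<in>{0..a}. (T has_real_derivative d x) (at x within {0..a})"
    and R: "\<forall>x\<in>{0..(a::real)}. T x \<in> {0..a}" and x: "x \<in> {0..a}" and a: "0 < a"
  shows "vector_derivative (T^^n) (at x within {0..a}) = Dp T d n x"
  using deriv_iter[OF D R x, of n] a x
  by (intro vector_derivative_within_closed_interval) (auto simp: has_real_derivative_iff_has_vector_derivative)

theorem proposition4:
  fixes a ah \<sigma> :: real
    and \<tau>1 \<tau>2 \<tau>21 d1 d2 d21 p :: "real \<Rightarrow> real"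
  assumes a_pos: "0 < a" and a_lt1: "a < 1"
    and tau1_C1: "\<forall>x\<in>{0..a}. (\<tau>1 has_real_derivative d1 x) (at x within {0..a})"
    and d1_cont: "continuous_on {0..a} d1"
    and tau2_C1: "\<forall>x\<in>{0..a}. (\<tau>2 has_real_derivative d2 x) (at x within {0..a})"
    and d2_cont: "continuous_on {0..a} d2"
    and tau1_range: "\<tau>1 ` {0..a} \<subseteq> {0..1}"
    and tau2_range: "\<tau>2 ` {0..a} \<subseteq> {0..1}"
    and tau1_mono: "strict_mono_on {0..a} \<tau>1"
    and tau2_mono: "strict_mono_on {0..a} \<tau>2"
    and tau1_0: "\<tau>1 0 = 0" and tau1_a: "\<tau>1 a = 1"
    and tau2_0: "\<tau>2 0 = 0" and tau2_a: "\<tau>2 a = 1"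
    and tau1_le: "\<forall>x\<in>{0..a}. \<tau>1 x \<le> x / a"
    and tau2_ge: "\<forall>x\<in>{0..a}. \<tau>2 x \<ge> x / a"
    and tau21_def: "\<forall>x\<in>{0..a}. \<tau>21 x = the_inv_into {0..a} \<tau>2 (\<tau>1 x)"
    and tau21_C1: "\<forall>x\<in>{0..a}. (\<tau>21 has_real_derivative d21 x) (at x within {0..a})"
    and d21_cont: "continuous_on {0..a} d21"
    and tau21_lt: "\<forall>x\<in>{0<..<a}. \<tau>21 x < x"
    and ah_pos: "0 < ah" and ah_lt: "ah < a"
    and sigma_lt: "\<sigma> < 1"
    and d21_le: "\<forall>x\<in>{0..ah}. d21 x \<le> \<sigma>"
    and p_bdd: "bounded (p ` {0..ah})"
    and p_eq: "\<forall>x\<in>{0..ah}. p x = p (\<tau>21 x) * d21 x - (d21 x - a * d1 x)"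
  shows "(\<forall>x\<in>{0..<a}. summable (\<lambda>n. (a * d1 ((\<tau>21 ^^ n) x) - d21 ((\<tau>21 ^^ n) x))
                  * vector_derivative (\<tau>21 ^^ n) (at x within {0..a})))
     \<and> (let q = (\<lambda>x. \<Sum>n. (a * d1 ((\<tau>21 ^^ n) x) - d21 ((\<tau>21 ^^ n) x))
                  * vector_derivative (\<tau>21 ^^ n) (at x within {0..a}))
        in (\<forall>x\<in>{0..ah}. q x = p x)
         \<and> (\<forall>x\<in>{0..<a}. q x = q (\<tau>21 x) * d21 x - (d21 x - a * d1 x))
         \<and> (\<forall>q'. (\<forall>x\<in>{0..ah}. q' x = p x)
                \<and> (\<forall>x\<in>{0..<a}. q' x = q' (\<tau>21 x) * d21 x - (d21 x - a * d1 x))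
                \<longrightarrow> (\<forall>x\<in>{0..<a}. q' x = q x)))"
proof -
  have inj2: "inj_on \<tau>2 {0..a}" using tau2_mono strict_mono_on_imp_inj_on by blast
  have cont2: "continuous_on {0..a} \<tau>2" by (rule DERIV_continuous_on) (use tau2_C1 in auto)
  have contT: "continuous_on {0..a} \<tau>21" by (rule DERIV_continuous_on) (use tau21_C1 in auto)
  have img: "\<tau>1 x \<in> \<tau>2 ` {0..a}" if x: "x \<in> {0..a}" for x
  proof -
    have "\<tau>1 x \<in> {0..1}" using tau1_range x by blast
    then obtain y where "0 \<le> y" "y \<le> a" "\<tau>2 y = \<tau>1 x"
      using IVT'[of \<tau>2 0 "\<tau>1 x" a] cont2 tau2_0 tau2_a a_pos by auto
    then show ?thesis by force
  qed
  have TR: "\<forall>x\<in>{0..a}. \<tau>21 x \<in> {0..a}"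
  proof
    fix x assume x: "x \<in> {0..a}"
    show "\<tau>21 x \<in> {0..a}" using tau21_def x the_inv_into_into[OF inj2 img[OF x], of "{0..a}"] by simp
  qed
  have T0: "\<tau>21 0 = 0"
    using tau21_def a_pos tau1_0 tau2_0 the_inv_into_f_f[OF inj2, of 0] by auto
  have Tinv: "\<tau>2 (\<tau>21 x) = \<tau>1 x" if "x \<in> {0..a}" for x
    using tau21_def f_the_inv_into_f[OF inj2 img[OF that]] that by auto
  have Tmono: "\<tau>21 x \<le> \<tau>21 y" if xy: "x \<in> {0..a}" "y \<in> {0..a}" "x \<le> y" for x y
  proof (rule ccontr)
    assume "\<not> ?thesis"
    hence lt: "\<tau>21 y < \<tau>21 x" by simp
    have "\<tau>2 (\<tau>21 y) < \<tau>2 (\<tau>21 x)"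
      using strict_mono_onD[OF tau2_mono _ _ lt] TR xy by auto
    moreover have "\<tau>1 x \<le> \<tau>1 y"
    proof (cases "x = y")
      case False then show ?thesis using strict_mono_onD[OF tau1_mono, of x y] xy by auto
    qed simp
    ultimately show False using Tinv[OF xy(1)] Tinv[OF xy(2)] by simp
  qed
  have Tle: "\<tau>21 x \<le> x" if "x \<in> {0..<a}" for x
  proof (cases "x = 0")
    case True then show ?thesis using T0 by simp
  next
    case False then have "x \<in> {0<..<a}" using that by auto
    then show ?thesis using tau21_lt by fastforce
  qed
  have TRa: "\<forall>x\<in>{0..<a}. \<tau>21 x \<in> {0..<a}" using Tle TR by fastforce
  have TRh: "\<forall>x\<in>{0..ah}. \<tau>21 x \<in> {0..ah}" using Tle TR ah_lt by fastforce
  have dnn: "0 \<le> d21 x" if x: "x \<in> {0..a}" for x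
  proof -
    have lim: "((\<lambda>y. (\<tau>21 y - \<tau>21 x) / (y - x)) \<longlongrightarrow> d21 x) (at x within {0..a})"
      using tau21_C1 x has_field_derivative_iff by blast
    have nb: "at x within {0..a} \<noteq> bot"
      using trivial_limit_within islimpt_Icc[OF a_pos] x by blast
    have ev: "eventually (\<lambda>y. 0 \<le> (\<tau>21 y - \<tau>21 x) / (y - x)) (at x within {0..a})"
      unfolding eventually_at_filter
    proof (rule always_eventually, intro allI impI)
      fix y assume y: "y \<noteq> x" "y \<in> {0..a}"
      show "0 \<le> (\<tau>21 y - \<tau>21 x) / (y - x)"
      proof (cases "x < y")
        case True then show ?thesis using Tmono[of x y] x y by (auto intro: divide_nonneg_nonneg)
      next
        case False then show ?thesis using Tmono[of y x] x y by (auto intro: divide_nonpos_nonpos)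
      qed
    qed
    show ?thesis using tendsto_lowerbound[OF lim ev nb] .
  qed
  have sig0: "0 \<le> \<sigma>"
  proof -
    have "0 \<le> d21 0" using dnn a_pos by auto
    moreover have "d21 0 \<le> \<sigma>" using d21_le ah_pos by auto
    ultimately show ?thesis by linarith
  qed
  have Dbound: "0 \<le> Dp \<tau>21 d21 n y \<and> Dp \<tau>21 d21 n y \<le> \<sigma>^n" if y: "y \<in> {0..ah}" for n y
  proof (induction n)
    case 0 then show ?case by simp
  next
    case (Suc n)
    have z: "(\<tau>21^^n) y \<in> {0..ah}" using iter_in[OF TRh y] .
    have d1': "0 \<le> d21 ((\<tau>21^^n) y)" using z dnn ah_lt by auto
    have d2': "d21 ((\<tau>21^^n) y) \<le> \<sigma>" using z d21_le by auto
    have "Dp \<tau>21 d21 n y * d21 ((\<tau>21^^n) y) \<le> \<sigma>^n * \<sigma>"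
      using mult_mono[OF conjunct2[OF Suc.IH] d2'] sig0 d1' by auto
    then show ?case using Suc.IH d1' by (simp add: Dp_Suc mult.commute)
  qed
  have contB: "continuous_on {0..a} (\<lambda>y. a * d1 y - d21 y)"
    using d1_cont d21_cont by (intro continuous_intros) auto
  then have "bounded ((\<lambda>y. a * d1 y - d21 y) ` {0..a})"
    by (intro compact_imp_bounded compact_continuous_image) auto
  then obtain C where C: "\<forall>y\<in>{0..a}. \<bar>a * d1 y - d21 y\<bar> \<le> C" unfolding bounded_iff by auto
  obtain M where M: "\<forall>y\<in>{0..ah}. \<bar>p y\<bar> \<le> M" using p_bdd unfolding bounded_iff by auto
  define t where "t n x = (a * d1 ((\<tau>21^^n) x) - d21 ((\<tau>21^^n) x)) * Dp \<tau>21 d21 n x" for n x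
  have tbound: "\<bar>t n y\<bar> \<le> C * \<sigma>^n" if y: "y \<in> {0..ah}" for n y
  proof -
    have z: "(\<tau>21^^n) y \<in> {0..a}" using iter_in[OF TRh y, of n] ah_lt by auto
    have "\<bar>t n y\<bar> = \<bar>a * d1 ((\<tau>21^^n) y) - d21 ((\<tau>21^^n) y)\<bar> * Dp \<tau>21 d21 n y"
      using Dbound[OF y, of n] by (simp add: t_def abs_mult)
    also have "\<dots> \<le> C * \<sigma>^n"
      using mult_mono[OF bspec[OF C z] conjunct2[OF Dbound[OF y, of n]]] Dbound[OF y, of n] bspec[OF C z]
      by (meson abs_ge_zero order_trans)
    finally show ?thesis .
  qed
  have sumh: "summable (\<lambda>n. t n y)" if y: "y \<in> {0..ah}" for y
  proof (rule summable_comparison_test'[where g="\<lambda>n. C * \<sigma>^n" and N=0])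
    show "summable (\<lambda>n. C * \<sigma> ^ n)" using sig0 sigma_lt by (intro summable_mult summable_geometric) auto
    show "norm (t n y) \<le> C * \<sigma> ^ n" for n using tbound[OF y] by simp
  qed
  have toZero: "\<exists>N. (\<tau>21^^N) x \<le> ah" if x: "x \<in> {0..<a}" for x
  proof -
    define s where "s n = (\<tau>21^^n) x" for n
    have sin: "s n \<in> {0..<a}" for n using iter_in[OF TRa x] s_def by simp
    have sS: "s (Suc n) = \<tau>21 (s n)" for n by (simp add: s_def)
    have dec: "decseq s" by (rule decseq_SucI) (use sS Tle sin in auto)
    obtain L where L: "s \<longlonglongrightarrow> L" "\<forall>i. L \<le> s i"
      using decseq_convergent[OF dec, of 0] sin by auto
    have L0: "0 \<le> L" using LIMSEQ_le_const[OF L(1), of 0] sin by auto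
    have La: "L < a" using L(2) sin[of 0] by (meson atLeastLessThan_iff order.strict_trans1)
    have "(\<lambda>n. \<tau>21 (s n)) \<longlonglongrightarrow> \<tau>21 L"
    proof (rule continuous_on_tendsto_compose[OF contT L(1)])
      show "L \<in> {0..a}" using L0 La by auto
      show "\<forall>\<^sub>F n in sequentially. s n \<in> {0..a}"
        using sin by (intro always_eventually allI) (auto simp: less_imp_le)
    qed
    moreover have "(\<lambda>n. \<tau>21 (s n)) \<longlonglongrightarrow> L" using LIMSEQ_Suc[OF L(1)] by (simp add: sS)
    ultimately have "\<tau>21 L = L" using LIMSEQ_unique by blast
    hence "L = 0"
    proof -
      assume fx: "\<tau>21 L = L"
      show "L = 0"
      proof (rule ccontr)
        assume "L \<noteq> 0"
        then have "L \<in> {0<..<a}" using L0 La by auto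
        then have "\<tau>21 L < L" using tau21_lt by blast
        then show False using fx by simp
      qed
    qed
    then have "eventually (\<lambda>n. s n < ah) sequentially" using order_tendstoD(2)[OF L(1)] ah_pos by auto
    then obtain N where "s N < ah" unfolding eventually_sequentially by blast
    then show ?thesis unfolding s_def by (blast intro: less_imp_le)
  qed
  have tshift: "t (n + N) x = t n ((\<tau>21^^N) x) * Dp \<tau>21 d21 N x" for n N x
    by (simp add: t_def Dp_add funpow_add)
  have suma: "summable (\<lambda>n. t n x)" if x: "x \<in> {0..<a}" for x
  proof -
    obtain N where N: "(\<tau>21^^N) x \<le> ah" using toZero x by blast
    have y: "(\<tau>21^^N) x \<in> {0..ah}" using N iter_in[OF TRa x, of N] by auto
    have "summable (\<lambda>n. t n ((\<tau>21^^N) x) * Dp \<tau>21 d21 N x)" using sumh[OF y] by (rule summable_mult2)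
    then have "summable (\<lambda>n. t (n + N) x)" by (simp add: tshift)
    then show ?thesis using summable_iff_shift[of "\<lambda>n. t n x" N] by simp
  qed
  have vd: "vector_derivative (\<tau>21 ^^ n) (at x within {0..a}) = Dp \<tau>21 d21 n x" if "x \<in> {0..a}" for n x
    using vderiv_iter[OF tau21_C1 TR that a_pos] .
  have tv: "(a * d1 ((\<tau>21 ^^ n) x) - d21 ((\<tau>21 ^^ n) x)) * vector_derivative (\<tau>21 ^^ n) (at x within {0..a}) = t n x"
    if "x \<in> {0..<a}" for n x
    using vd[of x n] that by (simp add: t_def)
  define q where "q = (\<lambda>x. \<Sum>n. (a * d1 ((\<tau>21 ^^ n) x) - d21 ((\<tau>21 ^^ n) x)) * vector_derivative (\<tau>21 ^^ n) (at x within {0..a}))"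
  have qt: "q x = (\<Sum>n. t n x)" if "x \<in> {0..<a}" for x
    using tv[OF that] by (simp add: q_def)
  have qeq: "\<forall>x\<in>{0..<a}. q x = q (\<tau>21 x) * d21 x - (d21 x - a * d1 x)"
  proof
    fix x assume x: "x \<in> {0..<a}"
    have Tx: "\<tau>21 x \<in> {0..<a}" using TRa x by blast
    have ts: "t (Suc n) x = t n (\<tau>21 x) * d21 x" for n
      using tshift[of n "Suc 0" x] by (simp add: Dp_def)
    have "q x = (\<Sum>n. t n x)" using qt x .
    also have "\<dots> = t 0 x + (\<Sum>n. t (Suc n) x)" using suminf_split_head[OF suma[OF x]] by simp
    also have "(\<Sum>n. t (Suc n) x) = (\<Sum>n. t n (\<tau>21 x)) * d21 x"
      unfolding ts by (rule suminf_mult2[symmetric, OF suma[OF Tx]])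
    also have "t 0 x = a * d1 x - d21 x" by (simp add: t_def)
    finally show "q x = q (\<tau>21 x) * d21 x - (d21 x - a * d1 x)" using qt[OF Tx] by simp
  qed
  have qp: "\<forall>x\<in>{0..ah}. q x = p x"
  proof
    fix x assume x: "x \<in> {0..ah}"
    have xa: "x \<in> {0..<a}" using x ah_lt by auto
    have pf: "p x = (\<Sum>k<N. t k x) + p ((\<tau>21^^N) x) * Dp \<tau>21 d21 N x" for N
      using iter_formula[OF TRh p_eq x, of N] by (simp add: t_def)
    have M0: "0 \<le> M" using M x by force
    have R: "(\<lambda>N. p ((\<tau>21^^N) x) * Dp \<tau>21 d21 N x) \<longlonglongrightarrow> 0"
    proof (rule Lim_null_comparison)
      show "(\<lambda>N. M * \<sigma>^N) \<longlonglongrightarrow> 0"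
        using sig0 sigma_lt by (intro tendsto_mult_right_zero LIMSEQ_power_zero) auto
      show "\<forall>\<^sub>F N in sequentially. norm (p ((\<tau>21^^N) x) * Dp \<tau>21 d21 N x) \<le> M * \<sigma>^N"
      proof (rule always_eventually, rule allI)
        fix N
        have y: "(\<tau>21^^N) x \<in> {0..ah}" using iter_in[OF TRh x] .
        have "\<bar>p ((\<tau>21^^N) x)\<bar> * Dp \<tau>21 d21 N x \<le> M * \<sigma>^N"
          using mult_mono[OF bspec[OF M y] conjunct2[OF Dbound[OF x, of N]]] Dbound[OF x, of N] M0 by simp
        then show "norm (p ((\<tau>21^^N) x) * Dp \<tau>21 d21 N x) \<le> M * \<sigma>^N"
          using Dbound[OF x, of N] by (simp add: abs_mult)
      qed
    qed
    have "(\<lambda>N. p x - p ((\<tau>21^^N) x) * Dp \<tau>21 d21 N x) \<longlonglongrightarrow> p x - 0"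
      by (intro tendsto_intros R)
    moreover have "(\<lambda>N. p x - p ((\<tau>21^^N) x) * Dp \<tau>21 d21 N x) = (\<lambda>N. \<Sum>k<N. t k x)"
      using pf by (simp add: fun_eq_iff algebra_simps)
    ultimately have "(\<lambda>N. \<Sum>k<N. t k x) \<longlonglongrightarrow> p x" by simp
    moreover have "(\<lambda>N. \<Sum>k<N. t k x) \<longlonglongrightarrow> (\<Sum>n. t n x)" using summable_LIMSEQ[OF suma[OF xa]] .
    ultimately have "(\<Sum>n. t n x) = p x" by (rule LIMSEQ_unique[rotated])
    then show "q x = p x" using qt[OF xa] by simp
  qed
  have uniq: "\<forall>x\<in>{0..<a}. q' x = q x"
    if h1: "\<forall>x\<in>{0..ah}. q' x = p x" and h2: "\<forall>x\<in>{0..<a}. q' x = q' (\<tau>21 x) * d21 x - (d21 x - a * d1 x)" for q'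
  proof
    fix x assume x: "x \<in> {0..<a}"
    obtain N where N: "(\<tau>21^^N) x \<le> ah" using toZero x by blast
    have y: "(\<tau>21^^N) x \<in> {0..ah}" using N iter_in[OF TRa x, of N] by auto
    have e1: "q' ((\<tau>21^^N) x) = q ((\<tau>21^^N) x)" using h1 qp y by auto
    show "q' x = q x"
      unfolding iter_formula[OF TRa h2 x, of N] iter_formula[OF TRa qeq x, of N] e1 ..
  qed
  have s1: "\<forall>x\<in>{0..<a}. summable (\<lambda>n. (a * d1 ((\<tau>21 ^^ n) x) - d21 ((\<tau>21 ^^ n) x))
                  * vector_derivative (\<tau>21 ^^ n) (at x within {0..a}))"
  proof
    fix x assume x: "x \<in> {0..<a}"
    show "summable (\<lambda>n. (a * d1 ((\<tau>21 ^^ n) x) - d21 ((\<tau>21 ^^ n) x))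
                  * vector_derivative (\<tau>21 ^^ n) (at x within {0..a}))"
      using suma[OF x] tv[OF x] by simp
  qed
  show ?thesis unfolding Let_def q_def[symmetric] using s1 qp qeq uniq by blast
qed

end
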